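(* Let $V$ be a polynomial of degree $d\ge2$, let $1\le j\ne k\le d$, and let $\Gamma\in\mathcal T_{j,k}$ be a contour with $\mathcal E_V(\Gamma)=\sup_{\Gamma'\in\mathcal T_{j,k}}\mathcal E_V(\Gamma')$. Let $\mu_\Gamma$ be the equilibrium measure of $\Gamma$ in the external field $\Re V$, and let $$Q(z)=\left(\frac12V'(z)-\int\frac{d\mu_\Gamma(s)}{z-s}\right)^2,\qquad z\in\mathbb C\setminus\operatorname{supp}\mu_\Gamma,$$ which is (the restriction of) a polynomial of degree $2d-2$. Then every zero of $Q$ of odd multiplicity lies in $\operatorname{supp}\mu_\Gamma$.
   Context: $S_1,\dots,S_d$ are the $d$ sectors of opening $\pi/d$ in which $\Re V(z)\to+\infty$, numbered counterclockwise; $\mathcal T_{j,k}$ is the set of contours starting at infinity in $S_j$ and ending at infinity in $S_k$. For a probability measure $\nu$, $E_V(\nu)=\iint\log\frac1{|s-t|}d\nu(s)d\nu(t)+\int\Re V\,d\nu$; $\mathcal E_V(\Gamma)=\inf\{E_V(\nu):\nu \text{ Borel probability measure on }\Gamma\}$, and the equilibrium measure $\mu_\Gamma$ is the unique minimizer. That $Q$ is a polynomial of degree $2d-2$ for such a maximizing $\Gamma$ is a known result used as a standing fact. *)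

theory Defs
  imports "HOL-Probability.Probability" "HOL-Computational_Algebra.Polynomial"
begin

(* The d sectors of opening pi/d in which Re V(z) -> +infinity, numbered counterclockwise.
   With V(z) = a z^d + ..., Re V -> +inf along the ray arg z = phi iff cos(Arg a + d phi) > 0.
   Sector m (1 <= m <= d) is the open sector centred at phi_m = (2 pi (m-1) - Arg a)/d. *)
definition sector_centre :: "complex poly \<Rightarrow> nat \<Rightarrow> real" where
  "sector_centre V m = (2 * pi * (real m - 1) - Arg (lead_coeff V)) / real (degree V)"

definition sector :: "complex poly \<Rightarrow> nat \<Rightarrow> complex set" where
  "sector V m = {z. z \<noteq> 0 \<and> (\<exists>\<phi>. z = of_real (cmod z) * cis \<phi> \<and>
       \<bar>\<phi> - sector_centre V m\<bar> < pi / (2 * real (degree V)))}"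

definition contour :: "(real \<Rightarrow> complex) \<Rightarrow> bool" where
  "contour \<gamma> \<longleftrightarrow> inj \<gamma> \<and> continuous_on UNIV \<gamma> \<and>
     (\<forall>a b. a < b \<longrightarrow> \<gamma> piecewise_C1_differentiable_on {a..b}) \<and>
     filterlim \<gamma> at_infinity at_bot \<and> filterlim \<gamma> at_infinity at_top"

definition contours_T :: "complex poly \<Rightarrow> nat \<Rightarrow> nat \<Rightarrow> (real \<Rightarrow> complex) set" where
  "contours_T V j k = {\<gamma>. contour \<gamma> \<and>
      (\<forall>\<^sub>F t in at_bot. \<gamma> t \<in> sector V j) \<and> (\<forall>\<^sub>F t in at_top. \<gamma> t \<in> sector V k)}"

definition borel_prob_on :: "complex set \<Rightarrow> complex measure \<Rightarrow> bool" where
  "borel_prob_on S \<nu> \<longleftrightarrow> prob_space \<nu> \<and> sets \<nu> = sets borel \<and> emeasure \<nu> (UNIV - S) = 0"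

definition energy_kernel :: "complex poly \<Rightarrow> complex \<Rightarrow> complex \<Rightarrow> ereal" where
  "energy_kernel V s t = (if s = t then \<infinity>
      else ereal (ln (1 / cmod (s - t)) + (Re (poly V s) + Re (poly V t)) / 2))"

(* E_V(nu) = \<integral>\<integral> log 1/|s-t| d nu d nu + \<integral> Re V d nu, written as the extended integral
   of the kernel above (positive part minus negative part) *)
definition energy :: "complex poly \<Rightarrow> complex measure \<Rightarrow> ereal" where
  "energy V \<nu> =
     enn2ereal (\<integral>\<^sup>+ p. e2ennreal (energy_kernel V (fst p) (snd p)) \<partial>(\<nu> \<Otimes>\<^sub>M \<nu>))
   - enn2ereal (\<integral>\<^sup>+ p. e2ennreal (- energy_kernel V (fst p) (snd p)) \<partial>(\<nu> \<Otimes>\<^sub>M \<nu>))"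

definition curve_energy :: "complex poly \<Rightarrow> complex set \<Rightarrow> ereal" where
  "curve_energy V \<Gamma> = (INF \<nu> \<in> {\<nu>. borel_prob_on \<Gamma> \<nu>}. energy V \<nu>)"

definition measure_support :: "complex measure \<Rightarrow> complex set" where
  "measure_support \<mu> = {z. \<forall>e>0. emeasure \<mu> (ball z e) > 0}"

end

theory Submission
  imports Defs "HOL-Complex_Analysis.Complex_Analysis"
begin

lemma alg_id:
  fixes a b :: complex
  assumes "a \<noteq> 0" "b \<noteq> 0" "a \<noteq> b"
  shows "(1/a - 1/b)/(a-b) + 1/b^2 = (a-b)*(1/(a*b^2))"
proof -
  have "a - b \<noteq> 0" using assms by simp
  then show ?thesis using assms
    by (simp add: field_simps power2_eq_square)
qed

lemma AE_far:
  fixes M :: "complex measure"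
  assumes S: "sets M = sets borel" and N: "emeasure M (ball z0 e) = 0"
  shows "AE s in M. e \<le> dist z0 s"
proof (rule AE_I'[of "ball z0 e"])
  show "ball z0 e \<in> null_sets M" using N S by (simp add: null_sets_def)
  show "{x \<in> space M. \<not> e \<le> dist z0 x} \<subseteq> ball z0 e" by auto
qed

lemma meas_cauchy:
  fixes M :: "complex measure"
  assumes S: "sets M = sets borel"
  shows "(\<lambda>s. 1 / (z - s)) \<in> borel_measurable M"
    "(\<lambda>s. 1 / ((z - s) * (w - s)^2)) \<in> borel_measurable M"
  using S by (simp_all add: measurable_cong_sets[OF S refl])

lemma cauchy_deriv:
  fixes M :: "complex measure"
  assumes P: "prob_space M" and S: "sets M = sets borel" and e: "e > 0"
    and N: "emeasure M (ball z0 e) = 0" and w: "w \<in> ball z0 (e/2)"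
  shows "((\<lambda>z. \<integral>s. 1/(z-s) \<partial>M) has_field_derivative (- (\<integral>s. 1/(w-s)^2 \<partial>M))) (at w)"
proof -
  interpret prob_space M by fact
  have far: "AE s in M. e \<le> dist z0 s" by (rule AE_far[OF S N])
  have near: "AE s in M. e/2 \<le> norm (z - s)" if z: "z \<in> ball z0 (e/2)" for z
    using far
  proof (rule AE_mp, intro AE_I2 impI)
    fix s assume "e \<le> dist z0 s"
    moreover have "dist z0 s \<le> dist z0 z + dist z s" by (rule dist_triangle)
    moreover have "dist z s = norm (z - s)" by (simp add: dist_norm)
    ultimately show "e/2 \<le> norm (z - s)" using z by simp
  qed
  have meas: "f \<in> borel_measurable M" if "f \<in> borel_measurable borel" for f :: "complex \<Rightarrow> complex"
    using that measurable_cong_sets[OF S refl, of "borel::complex measure"] by simp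
  have int1: "integrable M (\<lambda>s. 1/(z-s))" if z: "z \<in> ball z0 (e/2)" for z
  proof (rule integrable_const_bound[where B="2/e"])
    show "AE x in M. norm (1 / (z - x)) \<le> 2/e"
      using near[OF z]
    proof (rule AE_mp, intro AE_I2 impI)
      fix s assume h: "e/2 \<le> norm (z - s)"
      then have "norm (z-s) > 0" using e by linarith
      then show "norm (1 / (z - s)) \<le> 2/e" using h e
        by (simp add: norm_divide divide_simps)
    qed
    show "(\<lambda>s. 1/(z-s)) \<in> borel_measurable M" by (rule meas) measurable
  qed
  have int2: "integrable M (\<lambda>s. 1/(w-s)^2)"
  proof (rule integrable_const_bound[where B="4/e^2"])
    show "AE x in M. norm (1 / (w - x)^2) \<le> 4/e^2"
      using near[OF w]
    proof (rule AE_mp, intro AE_I2 impI)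
      fix s assume h: "e/2 \<le> norm (w - s)"
      then have "norm (w-s) > 0" using e by linarith
      moreover have "(e/2)^2 \<le> norm (w-s)^2" using h e by (intro power_mono) auto
      ultimately show "norm (1 / (w - s)^2) \<le> 4/e^2" using h e
        by (simp add: norm_divide norm_power divide_simps power_divide)
    qed
    show "(\<lambda>s. 1/(w-s)^2) \<in> borel_measurable M" by (rule meas) measurable
  qed
  define D where "D = - (\<integral>s. 1/(w-s)^2 \<partial>M)"
  define F where "F = (\<lambda>z. \<integral>s. 1/(z-s) \<partial>M)"
  have key: "norm ((F z - F w)/(z - w) - D) \<le> 8/e^3 * norm (z - w)"
    if z: "z \<in> ball z0 (e/2)" and zw: "z \<noteq> w" for z
  proof -
    have bnd3: "AE x in M. norm (1/((z-x)*(w-x)^2)) \<le> 8/e^3"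
        using near[OF w] near[OF z]
      proof (rule AE_mp[OF AE_conjI], intro AE_I2 impI)
        fix s assume h: "e/2 \<le> norm (w - s) \<and> e/2 \<le> norm (z - s)"
        have "(e/2)^2 \<le> norm (w-s)^2" using h e by (intro power_mono) auto
        then have "(e/2) * (e/2)^2 \<le> norm (z-s) * norm (w-s)^2"
          using h e by (intro mult_mono) auto
        moreover have "(e/2) * (e/2)^2 > 0" using e by simp
        ultimately show "norm (1/((z-s)*(w-s)^2)) \<le> 8/e^3"
          by (simp add: norm_divide norm_mult norm_power divide_simps power_divide)
             (use e in \<open>auto simp: power3_eq_cube power2_eq_square mult_ac\<close>)
      qed
    have int3: "integrable M (\<lambda>s. 1/((z-s)*(w-s)^2))"
      by (rule integrable_const_bound[where B="8/e^3", OF bnd3]) (rule meas, measurable)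
    have ae: "AE s in M. (1/(z-s) - 1/(w-s))/(z-w) + 1/(w-s)^2 = (z-w) * (1/((z-s)*(w-s)^2))"
      using near[OF w] near[OF z]
    proof (rule AE_mp[OF AE_conjI], intro AE_I2 impI)
      fix s assume h: "e/2 \<le> norm (w - s) \<and> e/2 \<le> norm (z - s)"
      then have "z - s \<noteq> 0" "w - s \<noteq> 0" using e by auto
      then show "(1/(z-s) - 1/(w-s))/(z-w) + 1/(w-s)^2 = (z-w) * (1/((z-s)*(w-s)^2))"
        using zw alg_id[of "z-s" "w-s"] by simp
    qed
    have I: "(\<integral>s. (1/(z-s) - 1/(w-s))/(z-w) + 1/(w-s)^2 \<partial>M) = (z-w) * (\<integral>s. 1/((z-s)*(w-s)^2) \<partial>M)"
    proof -
      have "(\<integral>s. (1/(z-s) - 1/(w-s))/(z-w) + 1/(w-s)^2 \<partial>M) = (\<integral>s. (z-w) * (1/((z-s)*(w-s)^2)) \<partial>M)"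
        by (rule integral_cong_AE[OF _ _ ae]) (auto intro!: meas simp del: times_divide_eq_right divide_inverse)
      also have "\<dots> = (z-w) * (\<integral>s. 1/((z-s)*(w-s)^2) \<partial>M)"
        by (rule integral_mult_right_zero)
      finally show ?thesis .
    qed
    have eq: "(F z - F w)/(z - w) - D = (z - w) * (\<integral>s. 1/((z-s)*(w-s)^2) \<partial>M)"
      unfolding I[symmetric] F_def D_def
      using int1[OF z] int1[OF w] int2
      by (simp add: integral_diff integral_add integrable_diff)
    have "norm (\<integral>s. 1/((z-s)*(w-s)^2) \<partial>M) \<le> 8/e^3"
    proof -
      have "norm (\<integral>s. 1/((z-s)*(w-s)^2) \<partial>M) \<le> (\<integral>s. norm (1/((z-s)*(w-s)^2)) \<partial>M)"
        by (rule integral_norm_bound)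
      also have "\<dots> \<le> (\<integral>s. 8/e^3 \<partial>M)"
        by (rule integral_mono_AE[OF _ _ bnd3]) (auto intro: integrable_norm int3)
      also have "\<dots> = 8/e^3" by (simp add: prob_space)
      finally show ?thesis .
    qed
    then show ?thesis unfolding eq norm_mult
      by (metis mult.commute mult_left_mono norm_ge_zero)
  qed
  have ev: "\<forall>\<^sub>F z in at w. norm ((F z - F w)/(z - w) - D) \<le> 8/e^3 * norm (z - w)"
  proof -
    have "\<forall>\<^sub>F z in nhds w. z \<in> ball z0 (e/2)"
      using w by (intro eventually_nhds_in_open) auto
    then show ?thesis unfolding eventually_at_filter
      by (rule eventually_mono) (use key in blast)
  qed
  have lim0: "((\<lambda>z. 8/e^3 * norm (z - w)) \<longlongrightarrow> 0) (at w)"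
    using e by (auto intro!: tendsto_eq_intros)
  have "((\<lambda>z. (F z - F w)/(z - w) - D) \<longlongrightarrow> 0) (at w)"
    by (rule Lim_null_comparison[OF ev lim0])
  then have "((\<lambda>z. (F z - F w)/(z - w)) \<longlongrightarrow> D) (at w)"
    by (simp add: LIM_zero_iff)
  then show ?thesis
    unfolding F_def D_def by (simp add: has_field_derivative_iff)
qed
lemma limit_contra:
  fixes f g :: "complex \<Rightarrow> complex"
  assumes "isCont f z0" "isCont g z0" "\<And>w. w \<in> ball z0 r \<Longrightarrow> w \<noteq> z0 \<Longrightarrow> f w = (w-z0)^k * g w"
    "r > 0" "k > 0"
  shows "f z0 = 0"
proof -
  have l1: "(f \<longlongrightarrow> f z0) (at z0)" using assms(1) isCont_def by blast
  have "isCont (\<lambda>w. (w-z0)^k * g w) z0" using assms(2) by (intro continuous_intros)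
  then have l2: "((\<lambda>w. (w-z0)^k * g w) \<longlongrightarrow> 0) (at z0)"
    using assms(5) unfolding isCont_def by (simp add: zero_power)
  have ev: "\<forall>\<^sub>F w in at z0. (w-z0)^k * g w = f w"
  proof -
    have "\<forall>\<^sub>F w in nhds z0. w \<in> ball z0 r"
      using assms(4) by (intro eventually_nhds_in_open) auto
    then show ?thesis unfolding eventually_at_filter
      by (rule eventually_mono) (use assms(3) in force)
  qed
  have "(f \<longlongrightarrow> 0) (at z0)" using tendsto_cong[OF ev] l2 by blast
  then show ?thesis using l1 tendsto_unique[OF at_neq_bot] by blast
qed

theorem lemma2p6:
  fixes V :: "complex poly" and j k :: nat and \<gamma> :: "real \<Rightarrow> complex"
    and \<mu> :: "complex measure" and Q :: "complex poly"
  assumes "degree V \<ge> 2"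
    and "1 \<le> j" "j \<le> degree V" "1 \<le> k" "k \<le> degree V" "j \<noteq> k"
    and "\<gamma> \<in> contours_T V j k"
    and "curve_energy V (range \<gamma>) = (SUP \<gamma>' \<in> contours_T V j k. curve_energy V (range \<gamma>'))"
    and "borel_prob_on (range \<gamma>) \<mu>"
    and "energy V \<mu> = curve_energy V (range \<gamma>)"
    and "degree Q = 2 * degree V - 2"
    and "\<forall>z. z \<notin> measure_support \<mu> \<longrightarrow>
           poly Q z = (poly (pderiv V) z / 2 - (\<integral>s. 1 / (z - s) \<partial>\<mu>))\<^sup>2"
  shows "\<forall>z. poly Q z = 0 \<and> odd (order z Q) \<longrightarrow> z \<in> measure_support \<mu>"
  proof (intro allI impI, rule ccontr)
  fix z0 assume h: "poly Q z0 = 0 \<and> odd (order z0 Q)" and nz: "z0 \<notin> measure_support \<mu>"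
  from nz obtain e where e: "e > 0" and ne: "\<not> emeasure \<mu> (ball z0 e) > 0"
    unfolding measure_support_def by auto
  then have N: "emeasure \<mu> (ball z0 e) = 0" by (simp add: not_gr_zero)
  from assms(9) have P: "prob_space \<mu>" and S: "sets \<mu> = sets borel"
    unfolding borel_prob_on_def by auto
  define G where "G = (\<lambda>z. poly (pderiv V) z / 2 - (\<integral>s. 1/(z-s) \<partial>\<mu>))"
  define B where "B = ball z0 (e/2)"
  have notsupp: "z \<notin> measure_support \<mu>" if z: "z \<in> B" for z
  proof
    assume "z \<in> measure_support \<mu>"
    then have pos: "emeasure \<mu> (ball z (e/2)) > 0" using e unfolding measure_support_def by auto
    have "ball z (e/2) \<subseteq> ball z0 e" using z unfolding B_def
      by (auto simp: dist_commute) (smt (verit) dist_triangle dist_commute)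
    then have "emeasure \<mu> (ball z (e/2)) \<le> emeasure \<mu> (ball z0 e)"
      by (rule emeasure_mono) (simp add: S)
    with pos N show False by simp
  qed
  have QG: "poly Q z = G z ^ 2" if "z \<in> B" for z
    using assms(12) notsupp[OF that] unfolding G_def by simp
  have holo: "G holomorphic_on B"
    unfolding holomorphic_on_def
  proof
    fix x assume x: "x \<in> B"
    have d1: "(\<lambda>z. \<integral>s. 1/(z-s) \<partial>\<mu>) field_differentiable at x"
      using cauchy_deriv[OF P S e N x[unfolded B_def]] field_differentiable_def by blast
    have d2: "(\<lambda>z. poly (pderiv V) z) field_differentiable at x"
      using poly_DERIV field_differentiable_def by blast
    have "G field_differentiable at x"
      unfolding G_def by (intro field_differentiable_diff field_differentiable_divide d1 d2) auto
    then show "G field_differentiable at x within B" by (rule field_differentiable_at_within)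
  qed
  have oB: "open B" "connected B" unfolding B_def by auto
  have z0B: "z0 \<in> B" unfolding B_def using e by simp
  have G0: "G z0 = 0" using QG[OF z0B] h by simp
  have Qnz: "Q \<noteq> 0" using assms(1) assms(11) by auto
  have inf: "infinite B"
  proof -
    have "z0 islimpt B" unfolding B_def using e by (intro islimpt_ball[THEN iffD2]) auto
    then show ?thesis unfolding islimpt_eq_infinite_ball using e
      by (metis B_def half_gt_zero inf.idem)
  qed
  show False
  proof (cases "G constant_on B")
    case True
    then have "\<forall>z\<in>B. G z = 0" using G0 z0B unfolding constant_on_def by metis
    then have "B \<subseteq> {x. poly Q x = 0}" using QG by auto
    then show False using poly_roots_finite[OF Qnz] inf finite_subset by blast
  next
    case False
    obtain n r g where gr: "0 < n" "0 < r" "ball z0 r \<subseteq> B" "g holomorphic_on ball z0 r"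
      "\<And>w. w \<in> ball z0 r \<Longrightarrow> G w = (w - z0)^n * g w" "\<And>w. w \<in> ball z0 r \<Longrightarrow> g w \<noteq> 0"
      by (rule holomorphic_factor_zero_nonconstant[OF holo oB z0B G0 False]) blast
    define m where "m = order z0 Q"
    obtain q where Qd: "Q = [:-z0,1:]^m * q" and nd: "\<not> [:-z0,1:] dvd q"
      using order_decomp[OF Qnz] unfolding m_def by blast
    have q0: "poly q z0 \<noteq> 0" using nd by (simp add: poly_eq_0_iff_dvd)
    have eqn: "(w-z0)^m * poly q w = (w-z0)^(2*n) * g w ^ 2" if "w \<in> ball z0 r" for w
    proof -
      have "(w-z0)^m * poly q w = poly Q w" by (subst Qd) (simp add: poly_power)
      also have "\<dots> = G w ^ 2" using QG gr(3) that by auto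
      also have "\<dots> = ((w-z0)^n)^2 * g w ^ 2" unfolding gr(5)[OF that] by (rule power_mult_distrib)
      also have "((w-z0)^n)^2 = (w-z0)^(2*n)" by (metis power_mult mult.commute)
      finally show ?thesis .
    qed
    have mn: "m \<noteq> 2*n" using h unfolding m_def by auto
    have cg: "isCont g z0"
      using continuous_on_eq_continuous_at[OF open_ball, THEN iffD1, OF holomorphic_on_imp_continuous_on[OF gr(4)]]
        gr(2) by simp
    have cg2: "isCont (\<lambda>w. g w ^ 2) z0" using cg by (intro continuous_intros)
    have cq: "isCont (poly q) z0" by simp
    show False
    proof (cases "m < 2*n")
      case True
      have "poly q z0 = 0"
      proof (rule limit_contra[OF cq cg2 _ gr(2), of "2*n - m"])
        fix w assume w: "w \<in> ball z0 r" "w \<noteq> z0"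
        have pe: "(w-z0)^(2*n) = (w-z0)^m * (w-z0)^(2*n-m)"
          by (metis True le_add_diff_inverse less_imp_le_nat power_add)
        have "(w-z0)^m * poly q w = (w-z0)^m * ((w-z0)^(2*n-m) * g w ^ 2)"
          using eqn[OF w(1)] unfolding pe by (simp only: mult.assoc)
        moreover have "(w-z0)^m \<noteq> 0" using w(2) by simp
        ultimately show "poly q w = (w-z0)^(2*n-m) * g w ^ 2" by (rule mult_left_cancel[THEN iffD1, rotated])
      qed (use True in simp)
      with q0 show False by simp
    next
      case False
      then have mgt: "m > 2*n" using mn by simp
      have "g z0 ^ 2 = 0"
      proof (rule limit_contra[OF cg2 cq _ gr(2), of "m - 2*n"])
        fix w assume w: "w \<in> ball z0 r" "w \<noteq> z0"
        have pe: "(w-z0)^m = (w-z0)^(2*n) * (w-z0)^(m-2*n)"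
          by (metis mgt le_add_diff_inverse less_imp_le_nat power_add)
        have "(w-z0)^(2*n) * g w ^ 2 = (w-z0)^(2*n) * ((w-z0)^(m - 2*n) * poly q w)"
          using eqn[OF w(1)] unfolding pe by (simp only: mult.assoc)
        moreover have "(w-z0)^(2*n) \<noteq> 0" using w(2) by simp
        ultimately show "g w ^ 2 = (w-z0)^(m-2*n) * poly q w" by (rule mult_left_cancel[THEN iffD1, rotated])
      qed (use mgt in simp)
      with gr(6)[of z0] gr(2) show False by simp
    qed
  qed
qed

end
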